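(* Consider an asymptotically polytropic equation of state whose asymptotic index at low pressure satisfies $0\le n_0\le 3$ (i.e. $\rho(p)=K p^{n_0/(n_0+1)}(1+O(p^{a_0/(n_0+1)}))$ as $p\to0$). Then every perfect fluid solution with positive mass, regular or not, has finite radius and finite total mass: there is $R<\infty$ with $p(r)>0$ for $r<R$ and $p(r)\to0$ as $r\to R$, and $M=\lim_{r\to R}m(r)<\infty$.
   Context: Equation of state: a barotropic relation $\rho=\rho(p)$, defined for $p\ge 0$, with $\rho>0$ for $p>0$, such that $\eta(p)=\int_0^p dp'/\rho(p')$ is finite for $p>0$; $\rho,p$ are regarded as functions of $\eta$. Index function: $n(\eta)=\frac{\eta}{\rho}\frac{d\rho}{d\eta}$. Asymptotically polytropic: $n$ is $C^1$ on $(0,\infty)$, bounded and non-negative on $[0,\infty]$, and $n(\eta)-n_0=O(\eta^{a_0})$ as $\eta\to0$, $n(\eta)-n_1=O(\eta^{-a_1})$ as $\eta\to\infty$ for some $n_0,n_1\ge0$, $a_0,a_1>0$. Perfect fluid solution: a solution $(m(r),p(r))$, $p>0$, of the Newtonian static spherically symmetric equations $dm/dr=4\pi r^2\rho(p)$, $dp/dr=-m\rho(p)/r^2$ (gravitational constant $1$), continued outward in $r$ as long as $p>0$. It is regular if $m(r)\to0$ and $p(r)\to p_c\in(0,\infty)$ as $r\to0$. "Any perfect fluid solution" here includes non-regular ones such as those with a point-mass singularity at $r=0$ and those that started with negative mass and reached $m=0$ at some radius, considered in the region where $m>0$. *)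

theory Defs
  imports "HOL-Analysis.Analysis" "HOL-Library.Landau_Symbols"
begin

definition eos_eta :: "(real \<Rightarrow> real) \<Rightarrow> real \<Rightarrow> real" where
  "eos_eta rho p = (LBINT q:{0<..p}. 1 / rho q)"

definition barotropic_eos :: "(real \<Rightarrow> real) \<Rightarrow> bool" where
  "barotropic_eos rho \<longleftrightarrow>
     (\<forall>p>0. rho p > 0) \<and>
     (\<forall>p>0. set_integrable lborel {0<..p} (\<lambda>q. 1 / rho q))"

text \<open>The pressure as a function of eta (eta is strictly increasing in p), and rho as a
  function of eta.\<close>

definition p_of_eta :: "(real \<Rightarrow> real) \<Rightarrow> real \<Rightarrow> real" where
  "p_of_eta rho e = (THE p. 0 \<le> p \<and> eos_eta rho p = e)"

definition rho_of_eta :: "(real \<Rightarrow> real) \<Rightarrow> real \<Rightarrow> real" where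
  "rho_of_eta rho e = rho (p_of_eta rho e)"

definition index_fun :: "(real \<Rightarrow> real) \<Rightarrow> real \<Rightarrow> real" where
  "index_fun rho e = e / rho_of_eta rho e * deriv (rho_of_eta rho) e"

definition asympt_polytropic ::
  "(real \<Rightarrow> real) \<Rightarrow> real \<Rightarrow> real \<Rightarrow> real \<Rightarrow> real \<Rightarrow> bool" where
  "asympt_polytropic rho n0 n1 a0 a1 \<longleftrightarrow>
     barotropic_eos rho \<and>
     (\<forall>e>0. \<exists>p>0. eos_eta rho p = e) \<and>
     (\<forall>e>0. rho_of_eta rho differentiable (at e)) \<and>
     index_fun rho C1_differentiable_on {0<..} \<and>
     bounded (index_fun rho ` {0<..}) \<and>
     (\<forall>e>0. index_fun rho e \<ge> 0) \<and>
     n0 \<ge> 0 \<and> n1 \<ge> 0 \<and> a0 > 0 \<and> a1 > 0 \<and>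
     (\<lambda>e. index_fun rho e - n0) \<in> O[at_right 0](\<lambda>e. e powr a0) \<and>
     (\<lambda>e. index_fun rho e - n1) \<in> O[at_top](\<lambda>e. e powr (- a1))"

definition fluid_solution ::
  "(real \<Rightarrow> real) \<Rightarrow> (real \<Rightarrow> real) \<Rightarrow> (real \<Rightarrow> real) \<Rightarrow> real set \<Rightarrow> bool" where
  "fluid_solution rho m P I \<longleftrightarrow>
     (\<forall>r\<in>I. r > 0 \<and> P r > 0 \<and>
        (m has_real_derivative 4 * pi * r\<^sup>2 * rho (P r)) (at r) \<and>
        (P has_real_derivative - (m r * rho (P r) / r\<^sup>2)) (at r))"

definition maximal_fluid_solution ::
  "(real \<Rightarrow> real) \<Rightarrow> (real \<Rightarrow> real) \<Rightarrow> (real \<Rightarrow> real) \<Rightarrow> real \<Rightarrow> ereal \<Rightarrow> bool" where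
  "maximal_fluid_solution rho m P r0 R \<longleftrightarrow>
     0 \<le> r0 \<and> ereal r0 < R \<and>
     fluid_solution rho m P {r. r0 < r \<and> ereal r < R} \<and>
     \<not> (\<exists>m' P' R'. R' > R \<and> fluid_solution rho m' P' {r. r0 < r \<and> ereal r < R'} \<and>
          (\<forall>r. r0 < r \<and> ereal r < R \<longrightarrow> m' r = m r \<and> P' r = P r))"

end

theory Submission
  imports Defs
begin

lemma ode_exist:
  fixes F G :: "real \<Rightarrow> real \<Rightarrow> real \<Rightarrow> real" and a h B K x0 y0 :: real
  assumes h: "h > 0" and K: "K \<ge> 0" and hK: "h * K \<le> 1/4"
   and bnd: "\<And>t x y. t \<in> {a..a+h} \<Longrightarrow> \<bar>F t x y\<bar> \<le> B \<and> \<bar>G t x y\<bar> \<le> B"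
   and lipF: "\<And>t x y x' y'. t \<in> {a..a+h} \<Longrightarrow> \<bar>F t x y - F t x' y'\<bar> \<le> K * (\<bar>x - x'\<bar> + \<bar>y - y'\<bar>)"
   and lipG: "\<And>t x y x' y'. t \<in> {a..a+h} \<Longrightarrow> \<bar>G t x y - G t x' y'\<bar> \<le> K * (\<bar>x - x'\<bar> + \<bar>y - y'\<bar>)"
   and cont: "\<And>u v. continuous_on {a..a+h} u \<Longrightarrow> continuous_on {a..a+h} v \<Longrightarrow>
       continuous_on {a..a+h} (\<lambda>s. F s (u s) (v s)) \<and> continuous_on {a..a+h} (\<lambda>s. G s (u s) (v s))"
  shows "\<exists>u v. continuous_on {a..a+h} u \<and> continuous_on {a..a+h} v \<and>
     (\<forall>t\<in>{a..a+h}. u t = x0 + integral {a..t} (\<lambda>s. F s (u s) (v s)) \<and>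
                    v t = y0 + integral {a..t} (\<lambda>s. G s (u s) (v s)))"
proof -
  define c where "c t = max a (min (a+h) t)" for t
  have cin: "c t \<in> {a..a+h}" for t using h by (auto simp: c_def)
  have cid: "t \<in> {a..a+h} \<Longrightarrow> c t = t" for t by (auto simp: c_def)
  have ccont: "continuous_on UNIV c" unfolding c_def by (intro continuous_intros)
  have gen: "(\<lambda>t. z0 + integral {a..c t} (\<lambda>s. H s (u s) (v s))) \<in> bcontfun"
    if Hb: "\<And>t x y. t \<in> {a..a+h} \<Longrightarrow> \<bar>H t x y\<bar> \<le> B"
     and Hc: "continuous_on {a..a+h} (\<lambda>s. H s (u s) (v s))" for H :: "real \<Rightarrow> real \<Rightarrow> real \<Rightarrow> real" and u v :: "real \<Rightarrow> real" and z0
  proof (rule bcontfun_normI)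
    have "continuous_on {a..a+h} (\<lambda>t. integral {a..t} (\<lambda>s. H s (u s) (v s)))"
      by (rule indefinite_integral_continuous_1) (rule integrable_continuous_real[OF Hc])
    then have "continuous_on UNIV (\<lambda>t. integral {a..c t} (\<lambda>s. H s (u s) (v s)))"
      using continuous_on_compose2[OF _ ccont, of "{a..a+h}"] cin by blast
    then show "continuous_on UNIV (\<lambda>t. z0 + integral {a..c t} (\<lambda>s. H s (u s) (v s)))"
      by (intro continuous_intros)
    fix t
    have "norm (integral {a..c t} (\<lambda>s. H s (u s) (v s))) \<le> B * (c t - a)"
      apply (rule integral_bound)
      using cin[of t] apply simp
      using Hc continuous_on_subset cin[of t] apply (metis atLeastAtMost_iff atLeastatMost_subset_iff order_refl)
      using Hb cin[of t] by auto
    also have "\<dots> \<le> \<bar>B\<bar> * h" using cin[of t] by (intro mult_mono) auto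
    finally show "norm (z0 + integral {a..c t} (\<lambda>s. H s (u s) (v s))) \<le> \<bar>z0\<bar> + \<bar>B\<bar> * h"
      by simp
  qed
  have gend: "dist (z0 + integral {a..c t} (\<lambda>s. H s (u1 s) (v1 s))) (z0 + integral {a..c t} (\<lambda>s. H s (u2 s) (v2 s)))
      \<le> h * K * (dist u1 u2 + dist v1 v2)"
    if Hl: "\<And>t x y x' y'. t \<in> {a..a+h} \<Longrightarrow> \<bar>H t x y - H t x' y'\<bar> \<le> K * (\<bar>x - x'\<bar> + \<bar>y - y'\<bar>)"
     and Hc1: "continuous_on {a..a+h} (\<lambda>s. H s (u1 s) (v1 s))"
     and Hc2: "continuous_on {a..a+h} (\<lambda>s. H s (u2 s) (v2 s))"
    for H :: "real \<Rightarrow> real \<Rightarrow> real \<Rightarrow> real" and u1 v1 u2 v2 :: "real \<Rightarrow>\<^sub>C real" and z0 t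
  proof -
    have sub: "{a..c t} \<subseteq> {a..a+h}" using cin[of t] by auto
    have "dist (z0 + integral {a..c t} (\<lambda>s. H s (u1 s) (v1 s))) (z0 + integral {a..c t} (\<lambda>s. H s (u2 s) (v2 s)))
        = norm (integral {a..c t} (\<lambda>s. H s (u1 s) (v1 s) - H s (u2 s) (v2 s)))"
    proof -
      have i1: "(\<lambda>s. H s (u1 s) (v1 s)) integrable_on {a..c t}"
        by (rule integrable_continuous_real[OF continuous_on_subset[OF Hc1 sub]])
      have i2: "(\<lambda>s. H s (u2 s) (v2 s)) integrable_on {a..c t}"
        by (rule integrable_continuous_real[OF continuous_on_subset[OF Hc2 sub]])
      show ?thesis by (simp only: dist_real_def integral_diff[OF i1 i2] real_norm_def)
    qed
    also have "\<dots> \<le> (K * (dist u1 u2 + dist v1 v2)) * (c t - a)"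
    proof (rule integral_bound)
      show "a \<le> c t" using cin[of t] by simp
      show "continuous_on {a..c t} (\<lambda>s. H s (u1 s) (v1 s) - H s (u2 s) (v2 s))"
        using continuous_on_subset[OF Hc1 sub] continuous_on_subset[OF Hc2 sub] by (intro continuous_intros)
      fix s assume s: "s \<in> {a..c t}"
      have "\<bar>H s (u1 s) (v1 s) - H s (u2 s) (v2 s)\<bar> \<le> K * (\<bar>u1 s - u2 s\<bar> + \<bar>v1 s - v2 s\<bar>)"
        using Hl s sub by blast
      also have "\<dots> \<le> K * (dist u1 u2 + dist v1 v2)"
        using dist_bounded[of u1 s u2] dist_bounded[of v1 s v2] K
        by (intro mult_left_mono) (auto simp: dist_real_def)
      finally show "norm (H s (u1 s) (v1 s) - H s (u2 s) (v2 s)) \<le> K * (dist u1 u2 + dist v1 v2)" by simp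
    qed
    also have "\<dots> \<le> (K * (dist u1 u2 + dist v1 v2)) * h"
      using cin[of t] K by (intro mult_left_mono) auto
    finally show ?thesis by (simp add: algebra_simps)
  qed
  define TF where "TF p = Bcontfun (\<lambda>t. x0 + integral {a..c t} (\<lambda>s. F s (apply_bcontfun (fst p) s) (apply_bcontfun (snd p) s)))"
    for p :: "(real \<Rightarrow>\<^sub>C real) \<times> (real \<Rightarrow>\<^sub>C real)"
  define TG where "TG p = Bcontfun (\<lambda>t. y0 + integral {a..c t} (\<lambda>s. G s (apply_bcontfun (fst p) s) (apply_bcontfun (snd p) s)))"
    for p :: "(real \<Rightarrow>\<^sub>C real) \<times> (real \<Rightarrow>\<^sub>C real)"
  have cc: "continuous_on {a..a+h} (\<lambda>s. F s (apply_bcontfun u s) (apply_bcontfun v s)) \<and>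
            continuous_on {a..a+h} (\<lambda>s. G s (apply_bcontfun u s) (apply_bcontfun v s))" for u v :: "real \<Rightarrow>\<^sub>C real"
    by (rule cont) auto
  have TFa: "apply_bcontfun (TF p) = (\<lambda>t. x0 + integral {a..c t} (\<lambda>s. F s (apply_bcontfun (fst p) s) (apply_bcontfun (snd p) s)))" for p
    unfolding TF_def using gen[of F, OF _ conjunct1[OF cc]] bnd by (auto intro!: Bcontfun_inverse)
  have TGa: "apply_bcontfun (TG p) = (\<lambda>t. y0 + integral {a..c t} (\<lambda>s. G s (apply_bcontfun (fst p) s) (apply_bcontfun (snd p) s)))" for p
    unfolding TG_def using gen[of G, OF _ conjunct2[OF cc]] bnd by (auto intro!: Bcontfun_inverse)
  define T where "T p = (TF p, TG p)" for p
  have dF: "dist (TF p) (TF q) \<le> h * K * (dist (fst p) (fst q) + dist (snd p) (snd q))" for p q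
    by (rule dist_bound, unfold TFa, rule gend[OF lipF]) (auto intro: conjunct1[OF cc])
  have dG: "dist (TG p) (TG q) \<le> h * K * (dist (fst p) (fst q) + dist (snd p) (snd q))" for p q
    by (rule dist_bound, unfold TGa, rule gend[OF lipG]) (auto intro: conjunct2[OF cc])
  have contr: "dist (T p) (T q) \<le> 1/2 * dist p q" for p q
  proof -
    obtain p1 p2 q1 q2 where pq: "p = (p1,p2)" "q = (q1,q2)" by fastforce
    define X where "X = h * K * (dist p1 q1 + dist p2 q2)"
    have X0: "0 \<le> X" unfolding X_def using h K by auto
    have hK0: "0 \<le> h * K" using h K by auto
    have "(dist (T p) (T q))\<^sup>2 = (dist (TF p) (TF q))\<^sup>2 + (dist (TG p) (TG q))\<^sup>2"
      unfolding T_def dist_Pair_Pair by simp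
    also have "\<dots> \<le> X\<^sup>2 + X\<^sup>2"
      using dF[of p q] dG[of p q] unfolding pq X_def
      by (intro add_mono power_mono) auto
    also have "\<dots> = 2 * (h*K)\<^sup>2 * (dist p1 q1 + dist p2 q2)\<^sup>2" unfolding X_def by (simp add: power_mult_distrib)
    also have "\<dots> \<le> 2 * (h*K)\<^sup>2 * (2 * ((dist p1 q1)\<^sup>2 + (dist p2 q2)\<^sup>2))"
    proof (intro mult_left_mono)
      show "(dist p1 q1 + dist p2 q2)\<^sup>2 \<le> 2 * ((dist p1 q1)\<^sup>2 + (dist p2 q2)\<^sup>2)"
        using sum_squares_ge_zero[of "dist p1 q1 - dist p2 q2" 0]
        by (simp add: power2_eq_square algebra_simps)
    qed auto
    also have "\<dots> = (2 * (h*K))\<^sup>2 * (dist p q)\<^sup>2" unfolding pq dist_Pair_Pair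
      by (simp add: power_mult_distrib)
    also have "\<dots> \<le> (1/2)\<^sup>2 * (dist p q)\<^sup>2"
      using hK hK0 by (intro mult_right_mono power_mono) auto
    also have "\<dots> = (1/2 * dist p q)\<^sup>2" by (rule power_mult_distrib[symmetric])
    finally have "(dist (T p) (T q))\<^sup>2 \<le> (1/2 * dist p q)\<^sup>2" .
    then show ?thesis by (rule power2_le_imp_le) simp
  qed
  obtain p where fp: "T p = p" using banach_fix_type[of "1/2" T] contr by auto
  define u where "u = apply_bcontfun (fst p)"
  define v where "v = apply_bcontfun (snd p)"
  have "TF p = fst p" "TG p = snd p" using fp unfolding T_def by (metis fst_conv, metis snd_conv)
  then have ue: "u t = x0 + integral {a..c t} (\<lambda>s. F s (u s) (v s))"
        and ve: "v t = y0 + integral {a..c t} (\<lambda>s. G s (u s) (v s))" for t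
    unfolding u_def v_def by (metis TFa, metis TGa)
  show ?thesis
  proof (intro exI conjI ballI)
    show "continuous_on {a..a+h} u" unfolding u_def by simp
    show "continuous_on {a..a+h} v" unfolding v_def by simp
    fix t assume t: "t \<in> {a..a+h}"
    show "u t = x0 + integral {a..t} (\<lambda>s. F s (u s) (v s))" using ue[of t] cid[OF t] by simp
    show "v t = y0 + integral {a..t} (\<lambda>s. G s (u s) (v s))" using ve[of t] cid[OF t] by simp
  qed
qed

locale eos =
  fixes rho :: "real \<Rightarrow> real" and n0 n1 a0 a1 :: real
  assumes ap: "asympt_polytropic rho n0 n1 a0 a1"
begin

abbreviation "E \<equiv> eos_eta rho"
abbreviation "G \<equiv> rho_of_eta rho"
abbreviation "nf \<equiv> index_fun rho"

lemma rho_pos: "p > 0 \<Longrightarrow> rho p > 0"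
  using ap by (auto simp: asympt_polytropic_def barotropic_eos_def)

lemma integ: "p > 0 \<Longrightarrow> set_integrable lborel {0<..p} (\<lambda>q. 1 / rho q)"
  using ap by (auto simp: asympt_polytropic_def barotropic_eos_def)

lemma E_nonpos: "p \<le> 0 \<Longrightarrow> E p = 0"
  by (simp add: eos_eta_def set_lebesgue_integral_def)

lemma E_diff:
  assumes "0 \<le> a" "a < b"
  shows "E b - E a = (LBINT q:{a<..b}. 1 / rho q)"
proof (cases "a = 0")
  case True then show ?thesis using E_nonpos[of 0] by (simp add: eos_eta_def)
next
  case False
  then have a: "a > 0" using assms by simp
  have "{0<..b} = {0<..a} \<union> {a<..b}" using a assms by auto
  then have "E b = (LBINT q:{0<..a}. 1 / rho q) + (LBINT q:{a<..b}. 1 / rho q)"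
    unfolding eos_eta_def
    apply simp
    apply (rule set_integral_Un)
      apply auto[1]
     apply (rule set_integrable_subset[OF integ[of b]]) using a assms apply auto[3]
    apply (rule set_integrable_subset[OF integ[of b]]) using a assms by auto
  then show ?thesis by (simp add: eos_eta_def)
qed

lemma E_strict:
  assumes "0 \<le> a" "a < b"
  shows "E a < E b"
proof -
  have b: "b > 0" using assms by simp
  define g where "g x = indicator {a<..b} x * (1 / rho x)" for x
  have "set_integrable lborel {a<..b} (\<lambda>q. 1/rho q)"
    by (rule set_integrable_subset[OF integ[OF b]]) (use assms in auto)
  then have gi: "integrable lborel g"
    unfolding g_def set_integrable_def by simp
  have g0: "0 \<le> g x" for x using rho_pos[of x] assms
    by (auto simp: g_def indicator_def)
  have I: "(LBINT q:{a<..b}. 1 / rho q) = integral\<^sup>L lborel g"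
    unfolding set_lebesgue_integral_def g_def by simp
  have "integral\<^sup>L lborel g \<noteq> 0"
  proof
    assume "integral\<^sup>L lborel g = 0"
    then have ae: "AE x in lborel. g x = 0"
      using integral_nonneg_eq_0_iff_AE[OF gi] g0 by auto
    have gnz: "g x \<noteq> 0" if "x \<in> {a<..b}" for x
    proof -
      have "rho x > 0" using rho_pos[of x] that assms by simp
      then show ?thesis using that by (simp add: g_def)
    qed
    have "AE x in lborel. x \<notin> {a<..b}" using ae
    proof (rule AE_mp)
      show "AE x in lborel. g x = 0 \<longrightarrow> x \<notin> {a<..b}" using gnz by (intro AE_I2) blast
    qed
    then have "emeasure lborel {a<..b} = 0"
      by (subst (asm) AE_iff_measurable[of "{a<..b}"]) auto
    then show False using assms emeasure_lborel_Ioc[of a b] by simp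
  qed
  moreover have "integral\<^sup>L lborel g \<ge> 0" using g0 by (simp add: integral_nonneg_AE)
  ultimately have "(LBINT q:{a<..b}. 1 / rho q) > 0" using I by linarith
  then show ?thesis using E_diff[OF assms] by linarith
qed

lemma E_pos: "p > 0 \<Longrightarrow> E p > 0"
  using E_strict[of 0 p] E_nonpos[of 0] by simp

lemma E_nonneg: "E p \<ge> 0"
  using E_pos[of p] E_nonpos[of p] by (cases "p > 0") auto

lemma E_mono: "0 \<le> a \<Longrightarrow> a \<le> b \<Longrightarrow> E a \<le> E b"
  using E_strict[of a b] by (cases "a = b") auto

lemma p_of_E: "0 \<le> p \<Longrightarrow> p_of_eta rho (E p) = p"
  unfolding p_of_eta_def
proof (rule the_equality)
  fix q assume "0 \<le> p" "0 \<le> q \<and> E q = E p"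
  then show "q = p" using E_strict[of p q] E_strict[of q p]
    by (cases "q < p"; cases "p < q") auto
qed auto

lemma G_E: "0 \<le> p \<Longrightarrow> G (E p) = rho p"
  by (simp add: rho_of_eta_def p_of_E)

lemma f_intg: "b > 0 \<Longrightarrow> (\<lambda>q. 1 / rho q) integrable_on {0..b}"
  apply (rule integrable_spike_set[OF set_borel_integral_eq_integral(1)[OF integ]])
  apply assumption
  by (rule negligible_subset[of "{0}"]; auto)+

lemma E_hk: "0 \<le> p \<Longrightarrow> E p = integral {0..p} (\<lambda>q. 1 / rho q)"
proof (cases "p = 0")
  case True then show ?thesis using E_nonpos[of 0] by simp
next
  case False
  assume "0 \<le> p"
  then have p: "p > 0" using False by simp
  have "E p = integral {0<..p} (\<lambda>q. 1 / rho q)"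
    unfolding eos_eta_def by (rule set_borel_integral_eq_integral(2)[OF integ[OF p]])
  also have "\<dots> = integral {0..p} (\<lambda>q. 1 / rho q)"
    by (rule integral_spike_set; rule negligible_subset[of "{0}"]; auto)
  finally show ?thesis .
qed

lemma E_cont_on: "b > 0 \<Longrightarrow> continuous_on {0..b} E"
proof -
  assume b: "b > 0"
  have "continuous_on {0..b} (\<lambda>p. integral {0..p} (\<lambda>q. 1 / rho q))"
    by (rule indefinite_integral_continuous_1[OF f_intg[OF b]])
  then show ?thesis by (rule continuous_on_cong[THEN iffD1, rotated 2]) (auto simp: E_hk)
qed

lemma E_isCont: "p > 0 \<Longrightarrow> isCont E p"
  by (rule continuous_on_interior[OF E_cont_on[of "p+1"]]) auto

lemma E_surj: "e > 0 \<Longrightarrow> \<exists>p>0. E p = e"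
  using ap by (auto simp: asympt_polytropic_def)

lemma G_pos: "e > 0 \<Longrightarrow> G e > 0"
  using E_surj[of e] G_E rho_pos by force

lemma nf_nonneg: "e > 0 \<Longrightarrow> nf e \<ge> 0"
  using ap by (auto simp: asympt_polytropic_def)

lemma G_deriv: "e > 0 \<Longrightarrow> (G has_real_derivative (nf e * G e / e)) (at e)"
proof -
  assume e: "e > 0"
  have "G differentiable (at e)" using ap e by (auto simp: asympt_polytropic_def)
  then have d: "(G has_real_derivative deriv G e) (at e)"
    using DERIV_deriv_iff_real_differentiable by blast
  have "nf e * G e / e = deriv G e" using e G_pos[OF e]
    by (simp add: index_fun_def)
  then show ?thesis using d by simp
qed

lemma G_mono: "0 < x \<Longrightarrow> x \<le> y \<Longrightarrow> G x \<le> G y"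
  apply (rule DERIV_nonneg_imp_increasing_open, assumption)
  subgoal for t using G_deriv[of t] nf_nonneg[of t] G_pos[of t]
    by (intro exI[of _ "nf t * G t / t"]) auto
  apply (rule continuous_on_subset[of "{0<..}"])
   apply (rule continuous_at_imp_continuous_on)
  using G_deriv DERIV_isCont by auto

lemma rho_eq: "q > 0 \<Longrightarrow> rho q = G (E q)"
  using G_E by simp

lemma rho_isCont: "p > 0 \<Longrightarrow> isCont rho p"
proof -
  assume p: "p > 0"
  have "isCont (\<lambda>q. G (E q)) p"
    apply (rule isCont_o2[OF E_isCont[OF p]])
    using G_deriv[OF E_pos[OF p]] DERIV_isCont by blast
  moreover have "\<forall>\<^sub>F q in nhds p. rho q = G (E q)"
    using eventually_nhds_in_open[of "{0<..}" p] p
    by (auto elim!: eventually_mono simp: rho_eq)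
  then have "isCont rho p = isCont (\<lambda>q. G (E q)) p" by (rule isCont_cong)
  ultimately show ?thesis by simp
qed

lemma E_deriv: "p > 0 \<Longrightarrow> (E has_real_derivative 1 / rho p) (at p)"
proof -
  assume p: "p > 0"
  have "((\<lambda>u. integral {0..u} (\<lambda>q. 1 / rho q)) has_vector_derivative 1 / rho p) (at p within {0..p+1} - {})"
    apply (rule integral_has_vector_derivative_continuous_at[OF f_intg[of "p+1"]])
    using p apply auto
    apply (rule continuous_at_imp_continuous_within)
    using rho_isCont[OF p] rho_pos[OF p] by (auto intro!: continuous_intros)
  then have "((\<lambda>u. integral {0..u} (\<lambda>q. 1 / rho q)) has_real_derivative 1 / rho p) (at p within {0..p+1})"
    by (simp add: has_real_derivative_iff_has_vector_derivative)
  then have "((\<lambda>u. integral {0..u} (\<lambda>q. 1 / rho q)) has_real_derivative 1 / rho p) (at p)"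
  proof -
    have "at p within {0..p+1} = at p" by (rule at_within_open_subset[of p "{0<..<p+1}"]) (use p in auto)
    then show ?thesis using \<open>((\<lambda>u. integral {0..u} (\<lambda>q. 1 / rho q)) has_real_derivative 1 / rho p) (at p within {0..p+1})\<close> by simp
  qed
  then show ?thesis
    by (rule has_field_derivative_transform_within_open[of _ _ _ "{0<..}"]) (use p E_hk in auto)
qed

lemma rho_mono: "0 < p \<Longrightarrow> p \<le> q \<Longrightarrow> rho p \<le> rho q"
  using G_mono[of "E p" "E q"] E_pos[of p] E_mono[of p q] rho_eq[of p] rho_eq[of q] by auto

lemma rho_deriv: "p > 0 \<Longrightarrow> (rho has_real_derivative nf (E p) / E p) (at p)"
proof -
  assume p: "p > 0"
  have "((\<lambda>q. G (E q)) has_real_derivative (nf (E p) * G (E p) / E p) * (1 / rho p)) (at p)"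
    by (rule DERIV_chain2[OF G_deriv[OF E_pos[OF p]] E_deriv[OF p]])
  then have "((\<lambda>q. G (E q)) has_real_derivative nf (E p) / E p) (at p)"
    using rho_eq[OF p] rho_pos[OF p] by simp
  then show ?thesis
    by (rule has_field_derivative_transform_within_open[of _ _ _ "{0<..}"]) (use p rho_eq in auto)
qed

lemma nf_bound: "\<exists>B\<ge>0. \<forall>e>0. nf e \<le> B"
proof -
  have "bounded (nf ` {0<..})" using ap by (auto simp: asympt_polytropic_def)
  then obtain B where "\<forall>x\<in>nf ` {0<..}. norm x \<le> B" by (auto simp: bounded_iff)
  then show ?thesis by (intro exI[of _ "\<bar>B\<bar>"]) force
qed

lemma rho_lip:
  assumes "0 < a" "a \<le> x" "x \<le> y"
  shows "\<exists>K\<ge>0. \<forall>x y. a \<le> x \<longrightarrow> x \<le> y \<longrightarrow> \<bar>rho y - rho x\<bar> \<le> K * (y - x)"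
proof -
  obtain B where B: "B \<ge> 0" "\<And>e. e > 0 \<Longrightarrow> nf e \<le> B" using nf_bound by auto
  have Ea: "E a > 0" using E_pos assms by simp
  have "\<bar>rho y - rho x\<bar> \<le> (B / E a) * (y - x)" if xy: "a \<le> x" "x \<le> y" for x y
  proof (cases "x = y")
    case False
    then have "x < y" using xy by simp
    from MVT2[OF this, of rho "\<lambda>z. nf (E z) / E z"]
    obtain z where z: "x < z" "z < y" "rho y - rho x = (y - x) * (nf (E z) / E z)"
      using rho_deriv assms xy by force
    have z0: "z > 0" using z xy assms by simp
    have Ez: "E a \<le> E z" using E_mono[of a z] assms xy z by simp
    have "\<bar>nf (E z) / E z\<bar> = nf (E z) / E z" using nf_nonneg[OF E_pos[OF z0]] E_pos[OF z0] by simp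
    also have "\<dots> \<le> B / E z" using B(2)[OF E_pos[OF z0]] E_pos[OF z0] by (simp add: divide_right_mono)
    also have "\<dots> \<le> B / E a" using Ez Ea B(1) by (simp add: frac_le)
    finally have "\<bar>nf (E z) / E z\<bar> \<le> B / E a" .
    have "\<bar>rho y - rho x\<bar> = \<bar>y - x\<bar> * \<bar>nf (E z) / E z\<bar>" by (simp only: z(3) abs_mult)
    also have "\<dots> \<le> \<bar>y - x\<bar> * (B / E a)" by (rule mult_left_mono) (use \<open>\<bar>nf (E z) / E z\<bar> \<le> B / E a\<close> in auto)
    finally show ?thesis using xy by (simp add: mult.commute)
  qed simp
  then show ?thesis using B Ea by (intro exI[of _ "B / E a"]) auto
qed

end

lemma mvt_near:
  fixes f g :: "real \<Rightarrow> real"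
  assumes c: "isCont f a"
    and der: "\<And>x. x \<noteq> a \<Longrightarrow> \<bar>x - a\<bar> < d \<Longrightarrow> (f has_real_derivative g x) (at x)"
    and y: "y \<noteq> a" "\<bar>y - a\<bar> < d"
  shows "\<exists>z. z \<noteq> a \<and> \<bar>z - a\<bar> < \<bar>y - a\<bar> \<and> f y - f a = (y - a) * g z"
proof -
  have ct: "isCont f x" if "\<bar>x - a\<bar> \<le> \<bar>y - a\<bar>" for x
  proof (cases "x = a")
    case True then show ?thesis using c by simp
  next
    case False then show ?thesis using der[of x] that y DERIV_isCont by force
  qed
  show ?thesis
  proof (cases "y < a")
    case True
    have "continuous_on {y..a} f"
      by (rule continuous_at_imp_continuous_on) (use ct True in auto)
    moreover have "f differentiable at x" if "y < x" "x < a" for x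
      using der[of x] that y True real_differentiable_def by force
    ultimately obtain l z where z: "y < z" "z < a" "(f has_real_derivative l) (at z)" "f a - f y = (a - y) * l"
      using MVT[OF True] by blast
    have "l = g z" using DERIV_unique[OF z(3) der[of z]] z y True by auto
    then show ?thesis using z True by (intro exI[of _ z]) (auto simp: algebra_simps)
  next
    case False
    then have ya: "a < y" using y by simp
    have "continuous_on {a..y} f"
      by (rule continuous_at_imp_continuous_on) (use ct ya in auto)
    moreover have "f differentiable at x" if "a < x" "x < y" for x
      using der[of x] that y ya real_differentiable_def by force
    ultimately obtain l z where z: "a < z" "z < y" "(f has_real_derivative l) (at z)" "f y - f a = (y - a) * l"
      using MVT[OF ya] by blast
    have "l = g z" using DERIV_unique[OF z(3) der[of z]] z y ya by auto
    then show ?thesis using z ya by (intro exI[of _ z]) (auto simp: algebra_simps)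
  qed
qed

lemma deriv_from_limit:
  fixes f g :: "real \<Rightarrow> real"
  assumes d: "d > 0" and c: "isCont f a"
    and der: "\<And>x. x \<noteq> a \<Longrightarrow> \<bar>x - a\<bar> < d \<Longrightarrow> (f has_real_derivative g x) (at x)"
    and lim: "isCont g a"
  shows "(f has_real_derivative g a) (at a)"
  unfolding has_field_derivative_iff tendsto_iff
proof (intro allI impI)
  fix e :: real assume e: "e > 0"
  from lim e have "\<forall>\<^sub>F x in at a. dist (g x) (g a) < e"
    unfolding isCont_def tendsto_iff by blast
  then obtain \<delta> where \<delta>: "\<delta> > 0" "\<And>x. x \<noteq> a \<Longrightarrow> dist x a < \<delta> \<Longrightarrow> dist (g x) (g a) < e"
    unfolding eventually_at by auto
  show "\<forall>\<^sub>F y in at a. dist ((f y - f a) / (y - a)) (g a) < e"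
    unfolding eventually_at
  proof (intro exI[of _ "min d \<delta>"] conjI ballI impI)
    show "min d \<delta> > 0" using d \<delta> by simp
    fix y :: real assume y: "y \<noteq> a \<and> dist y a < min d \<delta>"
    have "\<exists>z. z \<noteq> a \<and> \<bar>z - a\<bar> < \<bar>y - a\<bar> \<and> f y - f a = (y - a) * g z"
      by (rule mvt_near[where f=f and a=a and d=d and g=g and y=y]) (use c der y in \<open>auto simp: dist_real_def\<close>)
    then obtain z where z: "z \<noteq> a" "\<bar>z - a\<bar> < \<bar>y - a\<bar>" "f y - f a = (y - a) * g z"
      by blast
    have "(f y - f a) / (y - a) = g z" using z y by simp
    moreover have "dist (g z) (g a) < e" using \<delta>(2)[of z] z y by (auto simp: dist_real_def)
    ultimately show "dist ((f y - f a) / (y - a)) (g a) < e" by simp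
  qed
qed

lemma mono_lim_left:
  fixes f :: "real \<Rightarrow> real"
  assumes ab: "a < b"
    and mono: "\<And>x y. a \<le> x \<Longrightarrow> x \<le> y \<Longrightarrow> y < b \<Longrightarrow> f x \<le> f y"
    and bd: "\<And>x. a \<le> x \<Longrightarrow> x < b \<Longrightarrow> f x \<le> B"
  shows "\<exists>M. (f \<longlongrightarrow> M) (at_left b) \<and> (\<forall>x. a \<le> x \<longrightarrow> x < b \<longrightarrow> f x \<le> M)"
proof -
  define M where "M = Sup (f ` {a..<b})"
  have ne: "f ` {a..<b} \<noteq> {}" using ab by auto
  have bdd: "bdd_above (f ` {a..<b})" using bd by (auto intro!: bdd_aboveI)
  have le: "f x \<le> M" if "a \<le> x" "x < b" for x
    unfolding M_def by (rule cSup_upper) (use that bdd in auto)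
  have "(f \<longlongrightarrow> M) (at_left b)"
  proof (rule order_tendstoI)
    fix y assume "y < M"
    then obtain x where x: "x \<in> {a..<b}" "y < f x" using less_cSup_iff[OF ne bdd] unfolding M_def by auto
    have "\<forall>\<^sub>F z in at_left b. z \<in> {x<..<b}" using eventually_at_left_real x by auto
    then show "\<forall>\<^sub>F z in at_left b. y < f z"
    proof (rule eventually_mono)
      fix z assume "z \<in> {x<..<b}"
      then have "f x \<le> f z" using mono[of x z] x by auto
      then show "y < f z" using x by simp
    qed
  next
    fix y assume "M < y"
    have "\<forall>\<^sub>F z in at_left b. z \<in> {a<..<b}" using eventually_at_left_real ab by auto
    then show "\<forall>\<^sub>F z in at_left b. f z < y"
    proof (rule eventually_mono)
      fix z assume "z \<in> {a<..<b}"
      then have "f z \<le> M" using le[of z] by auto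
      then show "f z < y" using \<open>M < y\<close> by simp
    qed
  qed
  then show ?thesis using le by blast
qed

lemma incr_deriv:
  fixes f f' :: "real \<Rightarrow> real"
  assumes "s \<le> t" "\<And>x. s \<le> x \<Longrightarrow> x \<le> t \<Longrightarrow> (f has_real_derivative f' x) (at x)"
    "\<And>x. s \<le> x \<Longrightarrow> x \<le> t \<Longrightarrow> f' x \<ge> 0"
  shows "f s \<le> f t"
  apply (rule DERIV_nonneg_imp_increasing_open[OF assms(1)])
  using assms apply force
  apply (rule continuous_at_imp_continuous_on)
  using assms DERIV_isCont by force

lemma decr_deriv:
  fixes f f' :: "real \<Rightarrow> real"
  assumes "s \<le> t" "\<And>x. s \<le> x \<Longrightarrow> x \<le> t \<Longrightarrow> (f has_real_derivative f' x) (at x)"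
    "\<And>x. s \<le> x \<Longrightarrow> x \<le> t \<Longrightarrow> f' x \<le> 0"
  shows "f t \<le> f s"
  apply (rule DERIV_nonpos_imp_decreasing_open[OF assms(1)])
  using assms apply force
  apply (rule continuous_at_imp_continuous_on)
  using assms DERIV_isCont by force

context eos begin

lemma G_lower:
  assumes n3: "n0 \<le> 3"
  shows "\<exists>c>0. \<exists>e0>0. \<forall>e. 0 < e \<and> e \<le> e0 \<longrightarrow> G e \<ge> c * e ^ 3"
proof -
  have a0: "a0 > 0" using ap by (simp add: asympt_polytropic_def)
  have "(\<lambda>e. nf e - n0) \<in> O[at_right 0](\<lambda>e. e powr a0)" using ap by (simp add: asympt_polytropic_def)
  then obtain C where C: "C > 0" "\<forall>\<^sub>F e in at_right 0. norm (nf e - n0) \<le> C * norm (e powr a0)"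
    by (auto simp: bigo_def)
  then obtain \<delta> where \<delta>: "\<delta> > 0" "\<And>e. e > 0 \<Longrightarrow> e < \<delta> \<Longrightarrow> norm (nf e - n0) \<le> C * norm (e powr a0)"
    unfolding eventually_at_right_field by auto
  define e0 where "e0 = \<delta> / 2"
  have e0: "e0 > 0" "e0 < \<delta>" using \<delta> by (auto simp: e0_def)
  define h where "h e = ln (G e) - 3 * ln e - (C / a0) * e powr a0" for e
  define h' where "h' e = (1 / G e) * (nf e * G e / e) - 3 * (1 / e) - (C / a0) * (a0 * e powr (a0 - 1))" for e
  have hd: "(h has_real_derivative h' e) (at e)" if e: "e > 0" for e
    unfolding h_def h'_def
    apply (intro DERIV_diff DERIV_cmult)
      apply (rule DERIV_chain2[OF DERIV_ln_divide[OF G_pos[OF e]] G_deriv[OF e]])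
     apply (rule DERIV_ln_divide[OF e])
    by (rule has_real_derivative_powr[OF e])
  have h'le: "h' e \<le> 0" if e: "e > 0" "e < \<delta>" for e
  proof -
    have G: "G e > 0" using G_pos e by simp
    have pw: "e powr (a0 - 1) = e powr a0 / e" using e by (simp add: powr_diff)
    have "h' e = (nf e - 3 - C * e powr a0) / e"
      unfolding h'_def pw using G e a0 by (simp add: field_simps)
    moreover have "nf e \<le> n0 + C * e powr a0" using \<delta>(2)[OF e] by simp
    ultimately show ?thesis using n3 e by (simp add: divide_nonpos_pos)
  qed
  have hge: "h e \<ge> h e0" if e: "0 < e" "e \<le> e0" for e
    by (rule decr_deriv[of e e0 h h']) (use e e0 hd h'le in auto)
  define c where "c = exp (h e0)"
  have "G e \<ge> c * e ^ 3" if e: "0 < e" "e \<le> e0" for e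
  proof -
    have G: "G e > 0" using G_pos e by simp
    have "0 \<le> (C / a0) * e powr a0" using C a0 by simp
    then have "ln (G e) \<ge> 3 * ln e + h e0" using hge[OF e] unfolding h_def by simp
    then have "exp (3 * ln e + h e0) \<le> G e" using G by (metis exp_le_cancel_iff exp_ln)
    moreover have "exp (3 * ln e + h e0) = e ^ 3 * c"
    proof -
      have "ln (e ^ 3) = 3 * ln e" using ln_realpow[of e 3] by simp
      then have "exp (3 * ln e) = e ^ 3" using e by (metis exp_ln zero_less_power)
      then show ?thesis unfolding c_def exp_add by simp
    qed
    ultimately show ?thesis by (simp add: mult.commute)
  qed
  then show ?thesis using e0 unfolding c_def by (intro exI[of _ "exp (h e0)"]) auto
qed

end

context eos begin

lemma no_global:
  assumes n3: "n0 \<le> 3"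
    and fs: "fluid_solution rho m P {r. r0 < r}"
    and r1: "r0 < r1" "m r1 > 0"
  shows False
proof -
  have sol: "r > 0 \<and> P r > 0 \<and> (m has_real_derivative 4 * pi * r\<^sup>2 * rho (P r)) (at r) \<and>
        (P has_real_derivative - (m r * rho (P r) / r\<^sup>2)) (at r)" if "r \<ge> r1" for r
    using fs that r1 unfolding fluid_solution_def by auto
  have rpos: "r \<ge> r1 \<Longrightarrow> r > 0" and Ppos: "r \<ge> r1 \<Longrightarrow> P r > 0"
    and dm: "r \<ge> r1 \<Longrightarrow> (m has_real_derivative 4 * pi * r\<^sup>2 * rho (P r)) (at r)"
    and dP: "r \<ge> r1 \<Longrightarrow> (P has_real_derivative - (m r * rho (P r) / r\<^sup>2)) (at r)" for r
    using sol by auto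
  have rhoP: "r \<ge> r1 \<Longrightarrow> rho (P r) > 0" for r using rho_pos Ppos by auto
  have mmono: "m s \<le> m t" if "r1 \<le> s" "s \<le> t" for s t
  proof (rule incr_deriv[of s t m "\<lambda>r. 4 * pi * r\<^sup>2 * rho (P r)"])
    fix x assume x: "s \<le> x" "x \<le> t"
    then show "(m has_real_derivative 4 * pi * x\<^sup>2 * rho (P x)) (at x)" using dm that by simp
    have "rho (P x) > 0" using rhoP x that by simp
    then show "0 \<le> 4 * pi * x\<^sup>2 * rho (P x)" by simp
  qed (use that in simp)
  have mpos: "r \<ge> r1 \<Longrightarrow> m r > 0" for r using mmono[of r1 r] r1 by simp
  define \<eta> where "\<eta> r = E (P r)" for r
  have deta: "(\<eta> has_real_derivative - (m r / r\<^sup>2)) (at r)" if "r \<ge> r1" for r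
  proof -
    have "(\<eta> has_real_derivative (1 / rho (P r)) * (- (m r * rho (P r) / r\<^sup>2))) (at r)"
      unfolding \<eta>_def by (rule DERIV_chain2[OF E_deriv[OF Ppos[OF that]] dP[OF that]])
    then show ?thesis using rhoP[OF that] by simp
  qed
  have eta_pos: "r \<ge> r1 \<Longrightarrow> \<eta> r > 0" for r using E_pos Ppos unfolding \<eta>_def by auto
  have eta_decr: "\<eta> t \<le> \<eta> s" if "r1 \<le> s" "s \<le> t" for s t
  proof (rule decr_deriv[of s t \<eta> "\<lambda>r. - (m r / r\<^sup>2)"])
    fix x assume x: "s \<le> x" "x \<le> t"
    then show "(\<eta> has_real_derivative - (m x / x\<^sup>2)) (at x)" using deta that by simp
    have "m x > 0" using mpos x that by simp
    then show "- (m x / x\<^sup>2) \<le> 0" by simp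
  qed (use that in simp)
  have rhoG: "r \<ge> r1 \<Longrightarrow> rho (P r) = G (\<eta> r)" for r using rho_eq Ppos unfolding \<eta>_def by auto
  have r1pos: "r1 > 0" using rpos by auto

  have small: "\<exists>r\<ge>r1. \<eta> r < \<epsilon>" if eps: "\<epsilon> > 0" for \<epsilon>
  proof (rule ccontr)
    assume "\<not> ?thesis"
    then have big: "r \<ge> r1 \<Longrightarrow> \<eta> r \<ge> \<epsilon>" for r by force
    define c where "c = G \<epsilon>"
    have c: "c > 0" using G_pos eps by (simp add: c_def)
    have rhoc: "r \<ge> r1 \<Longrightarrow> rho (P r) \<ge> c" for r using G_mono[OF eps big] rhoG by (simp add: c_def)
    have mlow: "m r \<ge> (4 * pi * c / 3) * (r ^ 3 - r1 ^ 3)" if "r \<ge> r1" for r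
    proof -
      have "m r1 - (4 * pi * c / 3) * r1 ^ 3 \<le> m r - (4 * pi * c / 3) * r ^ 3"
      proof (rule incr_deriv[of r1 r _ "\<lambda>r. 4 * pi * r\<^sup>2 * rho (P r) - 4 * pi * c * r\<^sup>2"])
        fix x assume x: "r1 \<le> x" "x \<le> r"
        show "((\<lambda>r. m r - 4 * pi * c / 3 * r ^ 3) has_real_derivative 4 * pi * x\<^sup>2 * rho (P x) - 4 * pi * c * x\<^sup>2) (at x)"
          using dm[of x] x by (auto intro!: derivative_eq_intros simp: power2_eq_square)
        have "4 * pi * x\<^sup>2 * c \<le> 4 * pi * x\<^sup>2 * rho (P x)" using rhoc[of x] x by (intro mult_left_mono) auto
        then show "0 \<le> 4 * pi * x\<^sup>2 * rho (P x) - 4 * pi * c * x\<^sup>2" by (simp add: algebra_simps)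
      qed (use that in auto)
      then show ?thesis using r1 by (simp add: algebra_simps)
    qed
    have mlow2: "m r \<ge> pi * c * r ^ 3" if "r \<ge> 2 * r1" for r
    proof -
      have "r1 ^ 3 \<le> (r / 2) ^ 3" using that r1pos by (intro power_mono) auto
      then have "r ^ 3 - r1 ^ 3 \<ge> (7 / 8) * r ^ 3" by (simp add: power_divide)
      then have A: "(4 * pi * c / 3) * (r ^ 3 - r1 ^ 3) \<ge> (4 * pi * c / 3) * ((7 / 8) * r ^ 3)"
        using c by (intro mult_left_mono) auto
      have e: "(4 * pi * c / 3) * ((7 / 8) * r ^ 3) = (7 / 6) * (pi * c * r ^ 3)" by (simp add: field_simps)
      have nn: "pi * c * r ^ 3 \<ge> 0" using c that r1pos by simp
      have C: "m r \<ge> (4 * pi * c / 3) * (r ^ 3 - r1 ^ 3)" using mlow[of r] that r1pos by simp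
      show ?thesis using A e nn C by linarith
    qed
    define r2 where "r2 = 2 * r1"
    have r2: "r2 \<ge> r1" "r2 > 0" using r1pos by (auto simp: r2_def)
    have keta: "\<eta> r + (pi * c / 2) * r\<^sup>2 \<le> \<eta> r2 + (pi * c / 2) * r2\<^sup>2" if "r \<ge> r2" for r
    proof (rule decr_deriv[of r2 r _ "\<lambda>r. - (m r / r\<^sup>2) + pi * c * r"])
      fix x assume x: "r2 \<le> x" "x \<le> r"
      show "((\<lambda>r. \<eta> r + pi * c / 2 * r\<^sup>2) has_real_derivative - (m x / x\<^sup>2) + pi * c * x) (at x)"
        using deta[of x] x r2 by (auto intro!: derivative_eq_intros simp: power2_eq_square)
      have xp: "x > 0" using x r2 by simp
      have "pi * c * x ^ 3 \<le> m x" using mlow2[of x] x by (simp add: r2_def)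
      then have "pi * c * x \<le> m x / x\<^sup>2" using xp by (simp add: field_simps power2_eq_square power3_eq_cube)
      then show "- (m x / x\<^sup>2) + pi * c * x \<le> 0" by simp
    qed (use that in auto)
    define X where "X = \<eta> r2 + (pi * c / 2) * r2\<^sup>2"
    define r3 where "r3 = r2 + 2 * \<bar>X\<bar> / (pi * c) + 1"
    have r3: "r3 \<ge> r2" "r3 \<ge> 1" using c r2 by (auto simp: r3_def)
    have "r3\<^sup>2 \<ge> r3" using r3 by (simp add: power2_eq_square)
    moreover have "r3 > 2 * \<bar>X\<bar> / (pi * c)" using r2 by (simp add: r3_def)
    ultimately have "r3\<^sup>2 > 2 * \<bar>X\<bar> / (pi * c)" by linarith
    then have "(pi * c / 2) * r3\<^sup>2 > \<bar>X\<bar>" using c by (simp add: field_simps)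
    moreover have "\<eta> r3 + (pi * c / 2) * r3\<^sup>2 \<le> X" using keta[OF r3(1)] by (simp add: X_def)
    moreover have "\<eta> r3 > 0" using eta_pos r3 r2 by simp
    ultimately show False by linarith
  qed

  have eta_ge: "\<eta> r \<ge> m r / r" if r: "r \<ge> r1" for r
  proof (rule ccontr)
    assume neg: "\<not> ?thesis"
    define \<delta> where "\<delta> = m r / r - \<eta> r"
    have \<delta>: "\<delta> > 0" using neg by (simp add: \<delta>_def)
    define s where "s = r + m r / \<delta>"
    have s: "s \<ge> r" "s > m r / \<delta>" using mpos[OF r] \<delta> rpos[OF r] by (auto simp: s_def)
    have "\<eta> s - m r / s \<le> \<eta> r - m r / r"
    proof (rule decr_deriv[of r s _ "\<lambda>x. - (m x / x\<^sup>2) + m r / x\<^sup>2"])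
      fix x assume x: "r \<le> x" "x \<le> s"
      have xp: "x > 0" using x rpos[OF r] by simp
      show "((\<lambda>x. \<eta> x - m r / x) has_real_derivative - (m x / x\<^sup>2) + m r / x\<^sup>2) (at x)"
        using deta[of x] x r xp by (auto intro!: derivative_eq_intros simp: power2_eq_square)
      have "m r \<le> m x" using mmono[of r x] x r by simp
      then show "- (m x / x\<^sup>2) + m r / x\<^sup>2 \<le> 0" by (simp add: divide_right_mono)
    qed (use s in auto)
    moreover have "m r / s < \<delta>" using s \<delta> mpos[OF r] rpos[OF r] by (simp add: field_simps)
    moreover have "\<eta> s > 0" using eta_pos s r by simp
    ultimately show False unfolding \<delta>_def by linarith
  qed

  obtain c0 e0 where c0: "c0 > 0" "e0 > 0" and Gl: "\<And>e. 0 < e \<Longrightarrow> e \<le> e0 \<Longrightarrow> G e \<ge> c0 * e ^ 3"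
    using G_lower[OF n3] by auto
  obtain r2 where r2: "r2 \<ge> r1" "\<eta> r2 < e0" using small[OF c0(2)] by auto
  have r2p: "r2 > 0" using rpos r2 by simp
  have mder: "4 * pi * r\<^sup>2 * rho (P r) \<ge> 4 * pi * c0 * m r ^ 3 / r" if r: "r \<ge> r2" for r
  proof -
    have rp: "r > 0" using r r2p by simp
    have "\<eta> r \<le> e0" using eta_decr[of r2 r] r r2 by simp
    then have "rho (P r) \<ge> c0 * \<eta> r ^ 3" using Gl[of "\<eta> r"] eta_pos[of r] rhoG[of r] r r2 by simp
    moreover have "c0 * \<eta> r ^ 3 \<ge> c0 * (m r / r) ^ 3"
      using eta_ge[of r] r r2 mpos[of r] rp c0 by (intro mult_left_mono power_mono) auto
    ultimately have "rho (P r) \<ge> c0 * (m r / r) ^ 3" by simp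
    then have "4 * pi * r\<^sup>2 * rho (P r) \<ge> 4 * pi * r\<^sup>2 * (c0 * (m r / r) ^ 3)"
      by (intro mult_left_mono) auto
    also have "4 * pi * r\<^sup>2 * (c0 * (m r / r) ^ 3) = 4 * pi * c0 * m r ^ 3 / r"
      using rp by (simp add: field_simps power2_eq_square power3_eq_cube)
    finally show ?thesis by simp
  qed

  define k where "k r = inverse (m r * m r) + 8 * pi * c0 * ln r" for r
  have kdec: "k r \<le> k r2" if r: "r \<ge> r2" for r
  proof (rule decr_deriv[of r2 r k "\<lambda>x. - ((4 * pi * x\<^sup>2 * rho (P x) * m x + 4 * pi * x\<^sup>2 * rho (P x) * m x) * inverse ((m x * m x) ^ Suc (Suc 0))) + 8 * pi * c0 * (1 / x)"])
    fix x assume x: "r2 \<le> x" "x \<le> r"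
    have xp: "x > 0" and mx: "m x > 0" using x r2p mpos[of x] r2 by auto
    show "(k has_real_derivative - ((4 * pi * x\<^sup>2 * rho (P x) * m x + 4 * pi * x\<^sup>2 * rho (P x) * m x) * inverse ((m x * m x) ^ Suc (Suc 0))) + 8 * pi * c0 * (1 / x)) (at x)"
      unfolding k_def
      apply (intro DERIV_add DERIV_cmult)
       apply (rule DERIV_inverse_fun)
        apply (rule DERIV_mult)
      using dm[of x] x r2 apply auto[2]
      using mx apply simp
      by (rule DERIV_ln_divide[OF xp])
    have "(4 * pi * x\<^sup>2 * rho (P x) * m x + 4 * pi * x\<^sup>2 * rho (P x) * m x) * inverse ((m x * m x) ^ Suc (Suc 0))
        = 2 * (4 * pi * x\<^sup>2 * rho (P x)) / (m x ^ 3)"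
      using mx by (simp add: field_simps power2_eq_square power3_eq_cube)
    also have "\<dots> \<ge> 2 * (4 * pi * c0 * m x ^ 3 / x) / (m x ^ 3)"
      using mder[of x] x mx by (intro divide_right_mono mult_left_mono) auto
    also have "2 * (4 * pi * c0 * m x ^ 3 / x) / (m x ^ 3) = 8 * pi * c0 * (1 / x)"
      using mx xp by (simp add: field_simps)
    finally show "- ((4 * pi * x\<^sup>2 * rho (P x) * m x + 4 * pi * x\<^sup>2 * rho (P x) * m x) * inverse ((m x * m x) ^ Suc (Suc 0))) + 8 * pi * c0 * (1 / x) \<le> 0"
      by simp
  qed (use that in auto)
  define X where "X = inverse (m r2 * m r2) / (8 * pi * c0) + 1"
  define r3 where "r3 = r2 * exp X"
  have X0: "X \<ge> 0" unfolding X_def using c0 by (intro add_nonneg_nonneg divide_nonneg_pos) auto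
  have r3: "r3 \<ge> r2" using r2p X0 by (simp add: r3_def)
  have "ln r3 = ln r2 + X" using r2p by (simp add: r3_def ln_mult)
  then have "k r3 = inverse (m r3 * m r3) + 8 * pi * c0 * ln r2 + 8 * pi * c0 * X"
    by (simp add: k_def algebra_simps)
  moreover have "8 * pi * c0 * X = inverse (m r2 * m r2) + 8 * pi * c0"
    using c0 by (simp add: X_def field_simps)
  moreover have "inverse (m r3 * m r3) > 0" using mpos[of r3] r3 r2 by simp
  moreover have "k r2 = inverse (m r2 * m r2) + 8 * pi * c0 * ln r2" by (simp add: k_def)
  moreover have "8 * pi * c0 > 0" using c0 by simp
  ultimately have "k r3 > k r2" by linarith
  then show False using kdec[OF r3] by simp
qed

end

lemma int_deriv:
  fixes f u :: "real \<Rightarrow> real"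
  assumes c: "continuous_on {a..b} f" and eq: "\<And>t. t \<in> {a..b} \<Longrightarrow> u t = z + integral {a..t} f"
    and t: "a < t" "t < b"
  shows "(u has_real_derivative f t) (at t)"
proof -
  have "((\<lambda>x. z + integral {a..x} f) has_real_derivative 0 + f t) (at t within {a..b})"
    by (rule DERIV_add[OF DERIV_const integral_has_real_derivative[OF c]]) (use t in auto)
  moreover have "at t within {a..b} = at t" by (rule at_within_open_subset[of t "{a<..<b}"]) (use t in auto)
  ultimately have "((\<lambda>x. z + integral {a..x} f) has_real_derivative f t) (at t)" by simp
  then show ?thesis
    by (rule has_field_derivative_transform_within_open[of _ _ _ "{a<..<b}"]) (use t eq in auto)
qed

lemma glue_cont:
  fixes f1 f2 :: "real \<Rightarrow> real"
  assumes h: "h > 0" and l: "(f1 \<longlongrightarrow> f2 a) (at_left a)" and c: "continuous_on {a..a+h} f2"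
  shows "isCont (\<lambda>x. if x < a then f1 x else f2 x) a"
  unfolding isCont_def
proof (subst filterlim_at_split, intro conjI)
  have "\<forall>\<^sub>F x in at_left a. f1 x = (if x < a then f1 x else f2 x)"
    using eventually_at_left_real[of "a - 1" a] by (auto elim!: eventually_mono)
  then show "((\<lambda>x. if x < a then f1 x else f2 x) \<longlongrightarrow> (if a < a then f1 a else f2 a)) (at_left a)"
    using l tendsto_cong by fastforce
next
  have "(f2 \<longlongrightarrow> f2 a) (at_right a)" by (rule continuous_on_Icc_at_rightD[OF c]) (use h in simp)
  moreover have "\<forall>\<^sub>F x in at_right a. f2 x = (if x < a then f1 x else f2 x)"
    using eventually_at_right_real[of a "a + 1"] by (auto elim!: eventually_mono)
  ultimately show "((\<lambda>x. if x < a then f1 x else f2 x) \<longlongrightarrow> (if a < a then f1 a else f2 a)) (at_right a)"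
    using tendsto_cong by fastforce
qed

lemma glue_deriv:
  fixes f1 f2 g :: "real \<Rightarrow> real"
  assumes h: "h > 0" and r1: "r1 < a"
    and c: "isCont (\<lambda>x. if x < a then f1 x else f2 x) a"
    and d1: "\<And>x. r1 < x \<Longrightarrow> x < a \<Longrightarrow> (f1 has_real_derivative g x) (at x)"
    and d2: "\<And>x. a < x \<Longrightarrow> x < a + h \<Longrightarrow> (f2 has_real_derivative g x) (at x)"
    and gc: "isCont g a"
    and x: "r1 < x" "x < a + h"
  shows "((\<lambda>x. if x < a then f1 x else f2 x) has_real_derivative g x) (at x)"
proof -
  have off: "((\<lambda>x. if x < a then f1 x else f2 x) has_real_derivative g y) (at y)"
    if y: "r1 < y" "y < a + h" "y \<noteq> a" for y
  proof (cases "y < a")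
    case True
    show ?thesis
      by (rule has_field_derivative_transform_within_open[OF d1[of y], of "{..<a}"]) (use y True in auto)
  next
    case False
    then have "a < y" using y by simp
    show ?thesis
      by (rule has_field_derivative_transform_within_open[OF d2[of y], of "{a<..}"]) (use y \<open>a < y\<close> in auto)
  qed
  show ?thesis
  proof (cases "x = a")
    case False then show ?thesis using off x by simp
  next
    case True
    have "((\<lambda>x. if x < a then f1 x else f2 x) has_real_derivative g a) (at a)"
    proof (rule deriv_from_limit[OF _ c _ gc])
      show "0 < min h (a - r1)" using h r1 by simp
      fix y assume "y \<noteq> a" "\<bar>y - a\<bar> < min h (a - r1)"
      then show "((\<lambda>x. if x < a then f1 x else f2 x) has_real_derivative g y) (at y)"
        by (intro off) auto
    qed
    then show ?thesis using True by simp
  qed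
qed

context eos begin

lemma extend:
  assumes r0: "0 \<le> r0" and r1: "r0 < r1" "r1 < a"
    and fs: "fluid_solution rho m P {r. r0 < r \<and> ereal r < ereal a}"
    and Mlim: "(m \<longlongrightarrow> M) (at_left a)" and PL: "(P \<longlongrightarrow> L) (at_left a)" and Lp: "L > 0"
  shows "\<exists>m' P' R'. R' > ereal a \<and> fluid_solution rho m' P' {r. r0 < r \<and> ereal r < R'} \<and>
           (\<forall>r. r0 < r \<and> ereal r < ereal a \<longrightarrow> m' r = m r \<and> P' r = P r)"
proof -
  have sol: "r > 0 \<and> P r > 0 \<and> (m has_real_derivative 4 * pi * r\<^sup>2 * rho (P r)) (at r) \<and>
        (P has_real_derivative - (m r * rho (P r) / r\<^sup>2)) (at r)" if "r0 < r" "r < a" for r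
    using fs that unfolding fluid_solution_def by auto
  have apos: "a > 0" using r0 r1 by simp
  define clP where "clP y = max (L/2) (min (3*L/2) y)" for y
  define clM where "clM x = max (M-1) (min (M+1) x)" for x
  have clP_rng: "L/2 \<le> clP y" "clP y \<le> 3*L/2" for y using Lp by (auto simp: clP_def)
  have clP_lip: "\<bar>clP y - clP y'\<bar> \<le> \<bar>y - y'\<bar>" for y y' by (auto simp: clP_def max_def min_def abs_if)
  have clP_id: "\<bar>y - L\<bar> \<le> L/2 \<Longrightarrow> clP y = y" for y using Lp by (auto simp: clP_def max_def min_def abs_if split: if_splits)
  have clM_rng: "\<bar>clM x\<bar> \<le> \<bar>M\<bar> + 1" for x by (auto simp: clM_def max_def min_def abs_if)
  have clM_lip: "\<bar>clM x - clM x'\<bar> \<le> \<bar>x - x'\<bar>" for x x' by (auto simp: clM_def max_def min_def abs_if)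
  have clM_id: "\<bar>x - M\<bar> \<le> 1 \<Longrightarrow> clM x = x" for x by (auto simp: clM_def max_def min_def abs_if split: if_splits)
  define rmax where "rmax = rho (3*L/2)"
  have rmax: "rmax > 0" using rho_pos Lp by (simp add: rmax_def)
  have rcl_pos: "rho (clP y) > 0" for y using rho_pos clP_rng[of y] Lp by simp
  have rcl_le: "rho (clP y) \<le> rmax" for y
    unfolding rmax_def by (rule rho_mono) (use clP_rng[of y] Lp in auto)
  obtain K0 where K0: "K0 \<ge> 0" "\<And>x y. L/2 \<le> x \<Longrightarrow> x \<le> y \<Longrightarrow> \<bar>rho y - rho x\<bar> \<le> K0 * (y - x)"
    using rho_lip[of "L/2" "L/2" "L/2"] Lp by auto
  have rlip2: "\<bar>rho x - rho y\<bar> \<le> K0 * \<bar>x - y\<bar>" if "L/2 \<le> x" "L/2 \<le> y" for x y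
  proof (cases "x \<le> y")
    case True then show ?thesis using K0(2)[of x y] that by (simp add: abs_minus_commute)
  next
    case False then show ?thesis using K0(2)[of y x] that by simp
  qed
  have rlipc: "\<bar>rho (clP y) - rho (clP y')\<bar> \<le> K0 * \<bar>y - y'\<bar>" for y y'
  proof -
    have "\<bar>rho (clP y) - rho (clP y')\<bar> \<le> K0 * \<bar>clP y - clP y'\<bar>" by (rule rlip2) (use clP_rng in auto)
    also have "\<dots> \<le> K0 * \<bar>y - y'\<bar>" using clP_lip K0(1) by (intro mult_left_mono) auto
    finally show ?thesis .
  qed
  define F where "F t x y = 4 * pi * t\<^sup>2 * rho (clP y)" for t x y :: real
  define Gf where "Gf t x y = - (clM x * rho (clP y) / t\<^sup>2)" for t x y :: real
  define B where "B = 4 * pi * (a+1)\<^sup>2 * rmax + (\<bar>M\<bar> + 1) * rmax / a\<^sup>2"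
  define K where "K = 4 * pi * (a+1)\<^sup>2 * K0 + (rmax + (\<bar>M\<bar> + 1) * K0) / a\<^sup>2"
  define h where "h = min 1 (min (1 / (4 * (K + 1))) (min (1 / (B + 1)) (L / (2 * (B + 1)))))"
  have B0: "B \<ge> 0" using rmax apos unfolding B_def by (intro add_nonneg_nonneg) auto
  have K00: "K \<ge> 0" using rmax apos K0 unfolding K_def by (intro add_nonneg_nonneg) auto
  have h0: "h > 0" using B0 K00 Lp by (simp add: h_def)
  have h1: "h \<le> 1" by (simp add: h_def)
  have hK: "h * K \<le> 1/4"
  proof -
    have "h \<le> 1 / (4 * (K + 1))" by (simp add: h_def)
    then have "h * K \<le> 1 / (4 * (K + 1)) * K" using K00 by (intro mult_right_mono) auto
    also have "\<dots> \<le> 1/4" using K00 by (simp add: field_simps)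
    finally show ?thesis .
  qed
  have Bh1: "B * h < 1"
  proof -
    have "h \<le> 1 / (B + 1)" by (simp add: h_def)
    then have "B * h \<le> B * (1 / (B + 1))" using B0 by (intro mult_left_mono) auto
    also have "\<dots> < 1" using B0 by (simp add: field_simps)
    finally show ?thesis .
  qed
  have BhL: "B * h < L / 2"
  proof -
    have "h \<le> L / (2 * (B + 1))" by (simp add: h_def)
    then have "B * h \<le> B * (L / (2 * (B + 1)))" using B0 by (intro mult_left_mono) auto
    also have "\<dots> < L / 2" using B0 Lp by (simp add: field_simps)
    finally show ?thesis .
  qed
  have tsq: "a\<^sup>2 \<le> t\<^sup>2" "t\<^sup>2 \<le> (a+1)\<^sup>2" "t > 0" if "t \<in> {a..a+h}" for t
    using that apos h1 by (auto intro!: power_mono)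
  have bnd: "\<bar>F t x y\<bar> \<le> B \<and> \<bar>Gf t x y\<bar> \<le> B" if t: "t \<in> {a..a+h}" for t x y
  proof -
    have f1: "\<bar>F t x y\<bar> \<le> 4 * pi * (a+1)\<^sup>2 * rmax"
    proof -
      have "\<bar>F t x y\<bar> = 4 * pi * (t\<^sup>2 * rho (clP y))" using rcl_pos[of y] by (simp add: F_def abs_mult)
      also have "\<dots> \<le> 4 * pi * ((a+1)\<^sup>2 * rmax)"
        using tsq[OF t] rcl_le[of y] rcl_pos[of y] by (intro mult_left_mono mult_mono) auto
      finally show ?thesis by simp
    qed
    have f2: "\<bar>Gf t x y\<bar> \<le> (\<bar>M\<bar> + 1) * rmax / a\<^sup>2"
    proof -
      have "\<bar>Gf t x y\<bar> = \<bar>clM x\<bar> * rho (clP y) / t\<^sup>2" using rcl_pos[of y] by (simp add: Gf_def abs_mult)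
      also have "\<dots> \<le> (\<bar>M\<bar> + 1) * rmax / a\<^sup>2"
        apply (rule frac_le)
        using clM_rng[of x] rcl_le[of y] rcl_pos[of y] tsq[OF t] apos by (auto intro!: mult_mono)
      finally show ?thesis .
    qed
    have "0 \<le> (\<bar>M\<bar> + 1) * rmax / a\<^sup>2" "0 \<le> 4 * pi * (a+1)\<^sup>2 * rmax" using rmax by auto
    then show ?thesis using f1 f2 unfolding B_def by linarith
  qed
  have lipF: "\<bar>F t x y - F t x' y'\<bar> \<le> K * (\<bar>x - x'\<bar> + \<bar>y - y'\<bar>)" if t: "t \<in> {a..a+h}" for t x y x' y'
  proof -
    have "\<bar>F t x y - F t x' y'\<bar> = 4 * pi * t\<^sup>2 * \<bar>rho (clP y) - rho (clP y')\<bar>"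
      unfolding F_def by (simp add: abs_mult right_diff_distrib[symmetric])
    also have "\<dots> \<le> 4 * pi * (a+1)\<^sup>2 * (K0 * \<bar>y - y'\<bar>)"
      using tsq[OF t] rlipc[of y y'] by (intro mult_mono) auto
    also have "\<dots> \<le> 4 * pi * (a+1)\<^sup>2 * K0 * (\<bar>x - x'\<bar> + \<bar>y - y'\<bar>)"
      using K0 by (simp add: mult_left_mono)
    also have "\<dots> \<le> K * (\<bar>x - x'\<bar> + \<bar>y - y'\<bar>)"
      unfolding K_def using rmax K0 apos by (intro mult_right_mono) auto
    finally show ?thesis .
  qed
  have lipG: "\<bar>Gf t x y - Gf t x' y'\<bar> \<le> K * (\<bar>x - x'\<bar> + \<bar>y - y'\<bar>)" if t: "t \<in> {a..a+h}" for t x y x' y'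
  proof -
    have num: "\<bar>clM x * rho (clP y) - clM x' * rho (clP y')\<bar> \<le> (rmax + (\<bar>M\<bar> + 1) * K0) * (\<bar>x - x'\<bar> + \<bar>y - y'\<bar>)"
    proof -
      have "clM x * rho (clP y) - clM x' * rho (clP y') = (clM x - clM x') * rho (clP y) + clM x' * (rho (clP y) - rho (clP y'))"
        by (simp add: algebra_simps)
      then have "\<bar>clM x * rho (clP y) - clM x' * rho (clP y')\<bar> \<le> \<bar>clM x - clM x'\<bar> * rho (clP y) + \<bar>clM x'\<bar> * \<bar>rho (clP y) - rho (clP y')\<bar>"
        using rcl_pos[of y] by (simp add: abs_mult abs_triangle_ineq[THEN order_trans])
      also have "\<dots> \<le> \<bar>x - x'\<bar> * rmax + (\<bar>M\<bar> + 1) * (K0 * \<bar>y - y'\<bar>)"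
        using clM_lip[of x x'] rcl_le[of y] rcl_pos[of y] clM_rng[of x'] rlipc[of y y']
        by (intro add_mono mult_mono) auto
      also have "\<dots> \<le> (rmax + (\<bar>M\<bar> + 1) * K0) * (\<bar>x - x'\<bar> + \<bar>y - y'\<bar>)"
        using rmax K0 by (simp add: algebra_simps add_mono mult_left_mono)
      finally show ?thesis .
    qed
    have "\<bar>Gf t x y - Gf t x' y'\<bar> = \<bar>clM x * rho (clP y) - clM x' * rho (clP y')\<bar> / t\<^sup>2"
      unfolding Gf_def using tsq[OF t] by (simp add: diff_divide_distrib[symmetric])
    also have "\<dots> \<le> (rmax + (\<bar>M\<bar> + 1) * K0) * (\<bar>x - x'\<bar> + \<bar>y - y'\<bar>) / a\<^sup>2"
      apply (rule frac_le)
      using num tsq[OF t] apos rmax K0 by auto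
    also have "\<dots> = (rmax + (\<bar>M\<bar> + 1) * K0) / a\<^sup>2 * (\<bar>x - x'\<bar> + \<bar>y - y'\<bar>)" by simp
    also have "\<dots> \<le> K * (\<bar>x - x'\<bar> + \<bar>y - y'\<bar>)"
      unfolding K_def using K0 apos by (intro mult_right_mono) auto
    finally show ?thesis .
  qed
  have rc: "continuous_on {L/2..3*L/2} rho"
    by (rule continuous_at_imp_continuous_on) (use rho_isCont Lp in auto)
  have cont: "continuous_on {a..a+h} (\<lambda>s. F s (u s) (v s)) \<and> continuous_on {a..a+h} (\<lambda>s. Gf s (u s) (v s))"
    if cu: "continuous_on {a..a+h} u" and cv: "continuous_on {a..a+h} v" for u v
  proof -
    have cvv: "continuous_on {a..a+h} (\<lambda>s. clP (v s))" unfolding clP_def by (intro continuous_intros cv)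
    have cuu: "continuous_on {a..a+h} (\<lambda>s. clM (u s))" unfolding clM_def by (intro continuous_intros cu)
    have cr: "continuous_on {a..a+h} (\<lambda>s. rho (clP (v s)))"
      by (rule continuous_on_compose2[OF rc cvv]) (use clP_rng in auto)
    show ?thesis unfolding F_def Gf_def
      using cr cuu tsq apos by (auto intro!: continuous_intros)
  qed
  obtain u v where uv: "continuous_on {a..a+h} u" "continuous_on {a..a+h} v"
    and ueq: "\<And>t. t \<in> {a..a+h} \<Longrightarrow> u t = M + integral {a..t} (\<lambda>s. F s (u s) (v s))"
    and veq: "\<And>t. t \<in> {a..a+h} \<Longrightarrow> v t = L + integral {a..t} (\<lambda>s. Gf s (u s) (v s))"
    using ode_exist[where F=F and G=Gf and a=a and h=h and B=B and K=K and ?x0.0=M and ?y0.0=L, OF h0 K00 hK bnd lipF lipG cont] by blast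
  have cF: "continuous_on {a..a+h} (\<lambda>s. F s (u s) (v s))" and cG: "continuous_on {a..a+h} (\<lambda>s. Gf s (u s) (v s))"
    using cont[OF uv] by auto
  have ub: "\<bar>u t - M\<bar> \<le> B * h" and vb: "\<bar>v t - L\<bar> \<le> B * h" if t: "t \<in> {a..a+h}" for t
  proof -
    have sub: "{a..t} \<subseteq> {a..a+h}" using t by auto
    have "norm (integral {a..t} (\<lambda>s. F s (u s) (v s))) \<le> B * (t - a)"
      by (rule integral_bound) (use t continuous_on_subset[OF cF sub] bnd sub in auto)
    also have "\<dots> \<le> B * h" using t B0 by (intro mult_left_mono) auto
    finally show "\<bar>u t - M\<bar> \<le> B * h" using ueq[OF t] by simp
    have "norm (integral {a..t} (\<lambda>s. Gf s (u s) (v s))) \<le> B * (t - a)"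
      by (rule integral_bound) (use t continuous_on_subset[OF cG sub] bnd sub in auto)
    also have "\<dots> \<le> B * h" using t B0 by (intro mult_left_mono) auto
    finally show "\<bar>v t - L\<bar> \<le> B * h" using veq[OF t] by simp
  qed
  have uid: "clM (u t) = u t" and vid: "clP (v t) = v t" and vpos: "v t > 0" if t: "t \<in> {a..a+h}" for t
    using ub[OF t] vb[OF t] Bh1 BhL clM_id clP_id by auto
  have ua: "u a = M" and va: "v a = L" using ueq[of a] veq[of a] h0 by auto
  have du: "(u has_real_derivative 4 * pi * t\<^sup>2 * rho (v t)) (at t)"
   and dv: "(v has_real_derivative - (u t * rho (v t) / t\<^sup>2)) (at t)" if t: "a < t" "t < a + h" for t
  proof -
    have "(u has_real_derivative F t (u t) (v t)) (at t)" by (rule int_deriv[OF cF ueq t])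
    then show "(u has_real_derivative 4 * pi * t\<^sup>2 * rho (v t)) (at t)" using vid[of t] t by (simp add: F_def)
    have "(v has_real_derivative Gf t (u t) (v t)) (at t)" by (rule int_deriv[OF cG veq t])
    then show "(v has_real_derivative - (u t * rho (v t) / t\<^sup>2)) (at t)" using vid[of t] uid[of t] t by (simp add: Gf_def)
  qed
  define m' where "m' x = (if x < a then m x else u x)" for x
  define P' where "P' x = (if x < a then P x else v x)" for x
  have cm: "isCont m' a" unfolding m'_def by (rule glue_cont[OF h0 _ uv(1)]) (use Mlim ua in simp)
  have cP: "isCont P' a" unfolding P'_def by (rule glue_cont[OF h0 _ uv(2)]) (use PL va in simp)
  have m'a: "m' a = M" and P'a: "P' a = L" using ua va by (auto simp: m'_def P'_def)
  have cr: "isCont (\<lambda>x. rho (P' x)) a" by (rule isCont_o2[OF cP]) (use rho_isCont P'a Lp in simp)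
  have gmc: "isCont (\<lambda>x. 4 * pi * x\<^sup>2 * rho (P' x)) a" using cr by (intro continuous_intros)
  have gPc: "isCont (\<lambda>x. - (m' x * rho (P' x) / x\<^sup>2)) a" using cr cm apos by (intro continuous_intros) auto
  have dm': "(m' has_real_derivative 4 * pi * x\<^sup>2 * rho (P' x)) (at x)"
   and dP': "(P' has_real_derivative - (m' x * rho (P' x) / x\<^sup>2)) (at x)" if x: "r0 < x" "x < a + h" for x
  proof -
    have "(m' has_real_derivative 4 * pi * x\<^sup>2 * rho (P' x)) (at x) \<and> (P' has_real_derivative - (m' x * rho (P' x) / x\<^sup>2)) (at x)"
    proof (cases "x < a")
      case True
      have "(m' has_real_derivative 4 * pi * x\<^sup>2 * rho (P x)) (at x)"
        by (rule has_field_derivative_transform_within_open[of m _ _ "{..<a}"]) (use sol[of x] x True in \<open>auto simp: m'_def\<close>)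
      moreover have "(P' has_real_derivative - (m x * rho (P x) / x\<^sup>2)) (at x)"
        by (rule has_field_derivative_transform_within_open[of P _ _ "{..<a}"]) (use sol[of x] x True in \<open>auto simp: P'_def\<close>)
      ultimately show ?thesis using True by (simp add: m'_def P'_def)
    next
      case False
      then have xr1: "r1 < x" using r1 by simp
      show ?thesis
      proof
        show "(m' has_real_derivative 4 * pi * x\<^sup>2 * rho (P' x)) (at x)"
          unfolding m'_def
          apply (rule glue_deriv[OF h0 r1(2) _ _ _ _ xr1 x(2)])
          subgoal using cm unfolding m'_def .
          subgoal for y using sol[of y] r1 by (simp add: P'_def)
          subgoal for y using du[of y] by (simp add: P'_def)
          using gmc by simp
        show "(P' has_real_derivative - (m' x * rho (P' x) / x\<^sup>2)) (at x)"
          unfolding P'_def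
          apply (rule glue_deriv[OF h0 r1(2) _ _ _ _ xr1 x(2)])
          subgoal using cP unfolding P'_def .
          subgoal for y using sol[of y] r1 by (simp add: P'_def m'_def)
          subgoal for y using dv[of y] by (simp add: P'_def m'_def)
          using gPc by (simp add: P'_def m'_def)
      qed
    qed
    then show "(m' has_real_derivative 4 * pi * x\<^sup>2 * rho (P' x)) (at x)"
      "(P' has_real_derivative - (m' x * rho (P' x) / x\<^sup>2)) (at x)" by auto
  qed
  have P'pos: "P' x > 0" if x: "r0 < x" "x < a + h" for x
    using sol[of x] vpos[of x] x by (auto simp: P'_def)
  show ?thesis
  proof (intro exI conjI allI impI)
    show "ereal (a + h) > ereal a" using h0 by simp
    show "fluid_solution rho m' P' {r. r0 < r \<and> ereal r < ereal (a + h)}"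
      unfolding fluid_solution_def using dm' dP' P'pos r0 by auto
    fix r assume "r0 < r \<and> ereal r < ereal a"
    then show "m' r = m r" "P' r = P r" by (auto simp: m'_def P'_def)
  qed
qed

end

context eos begin

lemma finite_case:
  assumes r0: "0 \<le> r0" and r1: "r0 < r1" "r1 < a" "m r1 > 0"
    and fs: "fluid_solution rho m P {r. r0 < r \<and> ereal r < ereal a}"
    and nomax: "\<not> (\<exists>m' P' R'. R' > ereal a \<and> fluid_solution rho m' P' {r. r0 < r \<and> ereal r < R'} \<and>
           (\<forall>r. r0 < r \<and> ereal r < ereal a \<longrightarrow> m' r = m r \<and> P' r = P r))"
  shows "(P \<longlongrightarrow> 0) (at_left a) \<and> (\<exists>M. (m \<longlongrightarrow> M) (at_left a))"
proof -
  have sol: "r > 0 \<and> P r > 0 \<and> (m has_real_derivative 4 * pi * r\<^sup>2 * rho (P r)) (at r) \<and>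
        (P has_real_derivative - (m r * rho (P r) / r\<^sup>2)) (at r)" if "r1 \<le> r" "r < a" for r
    using fs that r1 unfolding fluid_solution_def by auto
  have rhoP: "r1 \<le> r \<Longrightarrow> r < a \<Longrightarrow> rho (P r) > 0" for r using rho_pos sol by auto
  have mmono: "m s \<le> m t" if "r1 \<le> s" "s \<le> t" "t < a" for s t
  proof (rule incr_deriv[of s t m "\<lambda>r. 4 * pi * r\<^sup>2 * rho (P r)"])
    fix x assume x: "s \<le> x" "x \<le> t"
    then show "(m has_real_derivative 4 * pi * x\<^sup>2 * rho (P x)) (at x)" using sol that by simp
    have "rho (P x) > 0" using rhoP x that by simp
    then show "0 \<le> 4 * pi * x\<^sup>2 * rho (P x)" by simp
  qed (use that in simp)
  have mpos: "r1 \<le> r \<Longrightarrow> r < a \<Longrightarrow> m r > 0" for r using mmono[of r1 r] r1 by simp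
  have Pdecr: "P t \<le> P s" if "r1 \<le> s" "s \<le> t" "t < a" for s t
  proof (rule decr_deriv[of s t P "\<lambda>r. - (m r * rho (P r) / r\<^sup>2)"])
    fix x assume x: "s \<le> x" "x \<le> t"
    show "(P has_real_derivative - (m x * rho (P x) / x\<^sup>2)) (at x)" using sol x that by simp
    have "rho (P x) > 0" "m x > 0" using rhoP mpos x that by auto
    then show "- (m x * rho (P x) / x\<^sup>2) \<le> 0" by simp
  qed (use that in simp)
  define D where "D = 4 * pi * a\<^sup>2 * rho (P r1)"
  have D0: "D \<ge> 0" using rhoP[of r1] r1 by (simp add: D_def)
  have mbound: "m r \<le> m r1 + D * a" if r: "r1 \<le> r" "r < a" for r
  proof -
    have "m r - D * r \<le> m r1 - D * r1"
    proof (rule decr_deriv[of r1 r _ "\<lambda>x. 4 * pi * x\<^sup>2 * rho (P x) - D"])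
      fix x assume x: "r1 \<le> x" "x \<le> r"
      show "((\<lambda>r. m r - D * r) has_real_derivative 4 * pi * x\<^sup>2 * rho (P x) - D) (at x)"
        using sol[of x] x r by (auto intro!: derivative_eq_intros)
      have xp: "x > 0" using sol[of x] x r by simp
      have "x\<^sup>2 \<le> a\<^sup>2" using x r xp by (intro power_mono) auto
      moreover have "rho (P x) \<le> rho (P r1)"
        by (rule rho_mono) (use sol[of x] x r Pdecr[of r1 x] in auto)
      ultimately have "x\<^sup>2 * rho (P x) \<le> a\<^sup>2 * rho (P r1)"
        using rhoP[of x] x r by (intro mult_mono) auto
      then show "4 * pi * x\<^sup>2 * rho (P x) - D \<le> 0" by (simp add: D_def)
    qed (use r in simp)
    then have "m r \<le> m r1 + D * (r - r1)" by (simp add: algebra_simps)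
    also have "\<dots> \<le> m r1 + D * a" using D0 r r1 r0 by (intro add_left_mono mult_left_mono) auto
    finally show ?thesis .
  qed
  have Ppos: "r1 \<le> r \<Longrightarrow> r < a \<Longrightarrow> P r > 0" for r using sol by blast
  have "\<exists>M. (m \<longlongrightarrow> M) (at_left a) \<and> (\<forall>x. r1 \<le> x \<longrightarrow> x < a \<longrightarrow> m x \<le> M)"
    by (rule mono_lim_left[of r1 a m "m r1 + D * a"]) (use r1 mmono mbound in auto)
  then obtain M where M: "(m \<longlongrightarrow> M) (at_left a)" by blast
  have "\<exists>L'. ((\<lambda>r. - P r) \<longlongrightarrow> L') (at_left a) \<and> (\<forall>x. r1 \<le> x \<longrightarrow> x < a \<longrightarrow> - P x \<le> L')"
  proof (rule mono_lim_left[of r1 a "\<lambda>r. - P r" 0])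
    show "r1 < a" using r1 by simp
    fix x y assume "r1 \<le> x" "x \<le> y" "y < a"
    then show "- P x \<le> - P y" using Pdecr[of x y] by simp
  next
    fix x assume "r1 \<le> x" "x < a"
    then show "- P x \<le> 0" using Ppos[of x] by simp
  qed
  then obtain L' where L': "((\<lambda>r. - P r) \<longlongrightarrow> L') (at_left a)" by blast
  define L where "L = - L'"
  have PL: "(P \<longlongrightarrow> L) (at_left a)" unfolding L_def by (rule tendsto_minus_cancel) (simp add: L')
  have ev: "\<forall>\<^sub>F x in at_left a. x \<in> {r1<..<a}" using eventually_at_left_real r1(2) by blast
  have "\<forall>\<^sub>F x in at_left a. 0 \<le> P x"
    using ev
  proof (rule eventually_mono)
    fix x assume "x \<in> {r1<..<a}"
    then show "0 \<le> P x" using Ppos[of x] by simp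
  qed
  then have L0: "L \<ge> 0" using tendsto_lowerbound[OF PL] by simp
  show ?thesis
  proof (cases "L = 0")
    case True then show ?thesis using PL M by auto
  next
    case False
    then have "L > 0" using L0 by simp
    then have "\<exists>m' P' R'. R' > ereal a \<and> fluid_solution rho m' P' {r. r0 < r \<and> ereal r < R'} \<and>
           (\<forall>r. r0 < r \<and> ereal r < ereal a \<longrightarrow> m' r = m r \<and> P' r = P r)"
      by (intro extend[OF r0 r1(1,2) fs M PL])
    then show ?thesis using nomax by blast
  qed
qed

end

theorem theorem2:
  fixes rho m P :: "real \<Rightarrow> real" and n0 n1 a0 a1 r0 :: real and R :: ereal
  assumes "asympt_polytropic rho n0 n1 a0 a1"
    and "n0 \<le> 3"
    and "maximal_fluid_solution rho m P r0 R"
    and "\<exists>r. r0 < r \<and> ereal r < R \<and> m r > 0"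
  shows "R < \<infinity> \<and> (P \<longlongrightarrow> 0) (at_left (real_of_ereal R)) \<and>
         (\<exists>M. (m \<longlongrightarrow> M) (at_left (real_of_ereal R)))"
proof -
  interpret eos rho n0 n1 a0 a1 by unfold_locales (rule assms(1))
  have r0: "0 \<le> r0" and r0R: "ereal r0 < R"
    and fs: "fluid_solution rho m P {r. r0 < r \<and> ereal r < R}"
    and nomax: "\<not> (\<exists>m' P' R'. R' > R \<and> fluid_solution rho m' P' {r. r0 < r \<and> ereal r < R'} \<and>
          (\<forall>r. r0 < r \<and> ereal r < R \<longrightarrow> m' r = m r \<and> P' r = P r))"
    using assms(3) unfolding maximal_fluid_solution_def by auto
  obtain r1 where r1: "r0 < r1" "ereal r1 < R" "m r1 > 0" using assms(4) by auto
  show ?thesis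
  proof (cases R)
    case (real a)
    have fs': "fluid_solution rho m P {r. r0 < r \<and> ereal r < ereal a}" using fs real by simp
    have nomax': "\<not> (\<exists>m' P' R'. R' > ereal a \<and> fluid_solution rho m' P' {r. r0 < r \<and> ereal r < R'} \<and>
           (\<forall>r. r0 < r \<and> ereal r < ereal a \<longrightarrow> m' r = m r \<and> P' r = P r))" using nomax real by simp
    have r1a: "r1 < a" using r1(2) real by simp
    have "(P \<longlongrightarrow> 0) (at_left a) \<and> (\<exists>M. (m \<longlongrightarrow> M) (at_left a))"
      by (rule finite_case[OF r0 r1(1) r1a r1(3) fs' nomax'])
    then show ?thesis using real by simp
  next
    case PInf
    have fsI: "fluid_solution rho m P {r. r0 < r}" using fs PInf by simp
    have False by (rule no_global[OF assms(2) fsI r1(1) r1(3)])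
    then show ?thesis ..
  next
    case MInf
    then show ?thesis using r0R by simp
  qed
qed


end
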